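(* Let $(X,\mathcal{A})$ be a measurable space, $f\in\mathcal{F}_{[0,1]}^{(X,\mathcal{A})}$, and $m$ a monotone measure on $(X,\mathcal{A})$ with $m(X)=1$. Then for all $0<r\le s<\infty$, \[ \big(\mathbf{Su}(m,f^{s})\big)^{1/s}\ \ge\ \big(\mathbf{Su}(m,f^{r})\big)^{1/r}. \]
   Context: A monotone measure on $(X,\mathcal{A})$ is $m:\mathcal{A}\to[0,\infty]$ with $m(\emptyset)=0$, $m(X)>0$, $m(A)\le m(B)$ for $A\subseteq B$. $\mathcal{F}_{[0,1]}^{(X,\mathcal{A})}$ is the set of $\mathcal{A}$-measurable $f:X\to[0,1]$. The Sugeno integral is $\mathbf{Su}(m,f)=\sup\{\min(t,m(\{f\ge t\})) : t\in(0,\infty]\}$. *)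

theory Defs
  imports "HOL-Analysis.Analysis"
begin

definition monotone_measure :: "'a measure \<Rightarrow> ('a set \<Rightarrow> ennreal) \<Rightarrow> bool" where
  "monotone_measure M m \<longleftrightarrow>
     m {} = 0 \<and> m (space M) > 0 \<and>
     (\<forall>A\<in>sets M. \<forall>B\<in>sets M. A \<subseteq> B \<longrightarrow> m A \<le> m B)"

definition F01 :: "'a measure \<Rightarrow> ('a \<Rightarrow> real) set" where
  "F01 M = {f. f \<in> borel_measurable M \<and> (\<forall>x\<in>space M. 0 \<le> f x \<and> f x \<le> 1)}"

definition sugeno :: "'a measure \<Rightarrow> ('a set \<Rightarrow> ennreal) \<Rightarrow> ('a \<Rightarrow> real) \<Rightarrow> ennreal" where
  "sugeno M m f = (SUP t\<in>{t::ennreal. 0 < t}. min t (m {x\<in>space M. t \<le> ennreal (f x)}))"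

end

theory Submission
  imports Defs
begin

lemma sug_le1:
  assumes f: "f \<in> borel_measurable M" and mm: "monotone_measure M m" and m1: "m (space M) = 1"
  shows "sugeno M m f \<le> 1"
  unfolding sugeno_def
proof (rule SUP_least)
  fix t :: ennreal
  have "{x\<in>space M. t \<le> ennreal (f x)} \<in> sets M" using f by measurable
  hence "m {x\<in>space M. t \<le> ennreal (f x)} \<le> m (space M)"
    using mm unfolding monotone_measure_def by auto
  thus "min t (m {x\<in>space M. t \<le> ennreal (f x)}) \<le> 1" using m1 by (simp add: min.coboundedI2)
qed

lemma pow_mono_iff:
  fixes a x y :: real
  assumes "0 < a" "0 \<le> x" "0 \<le> y"
  shows "x powr a \<le> y powr a \<longleftrightarrow> x \<le> y"
  using powr_mono2[of a x y] powr_less_mono2[of a y x] assms by force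

theorem corollary3p30:
  fixes M :: "'a measure" and m :: "'a set \<Rightarrow> ennreal" and f :: "'a \<Rightarrow> real"
    and r s :: real
  assumes "f \<in> F01 M"
    and "monotone_measure M m"
    and "m (space M) = 1"
    and "0 < r" and "r \<le> s"
  shows "enn2real (sugeno M m (\<lambda>x. f x powr s)) powr (1 / s)
           \<ge> enn2real (sugeno M m (\<lambda>x. f x powr r)) powr (1 / r)"
proof -
  have fm[measurable]: "f \<in> borel_measurable M" and f01: "\<And>x. x\<in>space M \<Longrightarrow> 0 \<le> f x \<and> f x \<le> 1"
    using assms(1) unfolding F01_def by auto
  have s0: "0 < s" using assms by linarith
  define Sr where "Sr = sugeno M m (\<lambda>x. f x powr r)"
  define Ss where "Ss = sugeno M m (\<lambda>x. f x powr s)"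
  have Sr1: "Sr \<le> 1" unfolding Sr_def by (rule sug_le1) (use assms in auto)
  have Ss1: "Ss \<le> 1" unfolding Ss_def by (rule sug_le1) (use assms in auto)
  define a where "a = enn2real Sr"
  define b where "b = enn2real Ss"
  have Sra: "Sr = ennreal a" unfolding a_def using Sr1
    by (metis ennreal_enn2real ennreal_one_less_top order.strict_trans1 less_top)
  have Ssb: "Ss = ennreal b" unfolding b_def using Ss1
    by (metis ennreal_enn2real ennreal_one_less_top order.strict_trans1 less_top)
  have b0: "0 \<le> b" unfolding b_def by simp
  have a0: "0 \<le> a" unfolding a_def by simp
  have key: "y powr (1/r) \<le> b powr (1/s)" if y0: "0 \<le> y" and ya: "y < a" for y
  proof -
    have "ennreal y < Sr" using Sra ya y0 by (simp add: ennreal_lessI)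
    then obtain t :: ennreal where t0: "0 < t"
      and yt: "ennreal y < min t (m {x\<in>space M. t \<le> ennreal (f x powr r)})"
      unfolding Sr_def sugeno_def less_SUP_iff by auto
    define A where "A = {x\<in>space M. t \<le> ennreal (f x powr r)}"
    have Am: "A \<in> sets M" unfolding A_def by measurable
    have mA1: "m A \<le> 1" using assms(2,3) Am unfolding monotone_measure_def by (metis sets.top sets.sets_into_space)
    have "0 < m A" using yt y0 A_def by (metis min.strict_boundedE ennreal_le_iff2 le_less_trans zero_le)
    hence "A \<noteq> {}" using assms(2) unfolding monotone_measure_def by auto
    then obtain x0 where x0: "x0 \<in> space M" "t \<le> ennreal (f x0 powr r)" unfolding A_def by auto
    have "f x0 powr r \<le> 1" using f01[OF x0(1)] powr_le1[of r "f x0"] assms(4) by auto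
    hence t1: "t \<le> 1" using x0(2) by (metis ennreal_le_1 order.trans)
    then obtain t' where tt: "t = ennreal t'" "0 \<le> t'" "t' \<le> 1"
      by (metis ennreal_le_1 ennreal_enn2real enn2real_nonneg ennreal_one_less_top order.strict_trans1 less_top)
    have t'0: "0 < t'" using t0 tt by auto
    define u where "u = t' powr (s/r)"
    have u0: "0 < u" unfolding u_def using t'0 by simp
    have eqA: "{x\<in>space M. ennreal u \<le> ennreal (f x powr s)} = A"
    proof -
      { fix x assume x: "x \<in> space M"
        have fx: "0 \<le> f x" using f01[OF x] by auto
        have fs: "f x powr s = (f x powr r) powr (s/r)" using assms(4) by (simp add: powr_powr)
        have "ennreal u \<le> ennreal (f x powr s) \<longleftrightarrow> u \<le> f x powr s"
          using u0 by (simp add: ennreal_le_iff2)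
        also have "\<dots> \<longleftrightarrow> t' \<le> f x powr r" unfolding u_def fs
          by (rule pow_mono_iff) (use assms s0 t'0 in auto)
        also have "\<dots> \<longleftrightarrow> t \<le> ennreal (f x powr r)" using tt by (simp add: ennreal_le_iff)
        finally have "ennreal u \<le> ennreal (f x powr s) \<longleftrightarrow> t \<le> ennreal (f x powr r)" . }
      thus ?thesis unfolding A_def by auto
    qed
    have "min (ennreal u) (m A) \<le> Ss" unfolding Ss_def sugeno_def
      using eqA u0 by (intro SUP_upper2[of "ennreal u"]) auto
    have yt': "y < t'" using yt tt y0 by (simp add: ennreal_less_iff)
    have ym: "ennreal y < m A" using yt A_def by simp
    have y1: "y \<le> 1" using yt' tt by simp
    have e1: "1 \<le> s/r" using assms by simp
    have "y powr (s/r) \<le> u" unfolding u_def using y0 yt' e1 by (intro powr_mono2) auto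
    moreover have "y powr (s/r) \<le> y" using powr_mono'[OF e1 y0 y1] y0 by simp
    ultimately have "ennreal (y powr (s/r)) \<le> min (ennreal u) (m A)"
      using ym by (metis ennreal_leI min.bounded_iff order.trans less_imp_le)
    also have "\<dots> \<le> Ss" by fact
    finally have "y powr (s/r) \<le> b" using Ssb b0 by (simp add: ennreal_le_iff)
    hence "(y powr (s/r)) powr (1/s) \<le> b powr (1/s)" using s0 by (intro powr_mono2) auto
    also have "(y powr (s/r)) powr (1/s) = y powr (1/r)" using s0 by (simp add: powr_powr)
    finally show ?thesis .
  qed
  show ?thesis unfolding Sr_def[symmetric] Ss_def[symmetric] a_def[symmetric] b_def[symmetric]
  proof (rule ccontr)
    assume "\<not> a powr (1/r) \<le> b powr (1/s)"
    hence lt: "b powr (1/s) < a powr (1/r)" by simp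
    then obtain z where z: "b powr (1/s) < z" "z < a powr (1/r)" using dense by blast
    have z0: "0 < z" using z(1) by (meson le_less_trans powr_ge_zero)
    have "z powr r < (a powr (1/r)) powr r" using z0 z(2) assms(4) by (intro powr_less_mono2) auto
    also have "\<dots> = a" using a0 assms(4) by (simp add: powr_powr)
    finally have "z powr r < a" .
    from key[OF _ this] have "(z powr r) powr (1/r) \<le> b powr (1/s)" by simp
    moreover have "(z powr r) powr (1/r) = z" using z0 assms(4) by (simp add: powr_powr)
    ultimately show False using z(1) by simp
  qed
qed

end
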